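(* Let $n,d\ge 1$ and let $$T=\begin{pmatrix} B_{11} & \cdots & B_{1n}\\ \vdots & \ddots & \vdots\\ B_{n1} & \cdots & B_{nn}\end{pmatrix}=\sum_{i,j=1}^n E_{ij}\otimes B_{ij}\in M(nd,\mathbb{C}),$$ where $E_{ij}$ are the standard matrix units of $M(n,\mathbb{C})$, and suppose that all blocks $B_{ij}\in M(d,\mathbb{C})$ ($i,j=1,\ldots,n$) are normal and pairwise commute. Let $\{u_k\}_{k=1}^d$ be a common orthonormal basis of eigenvectors of all the $B_{ij}$, with $B_{ij}u_k=\beta_k^{ij}u_k$ for $i,j=1,\ldots,n$, $k=1,\ldots,d$, and for each $k$ let $M(\beta_k^{ij})=(\beta_k^{ij})_{i,j=1}^n\in M(n,\mathbb{C})$, so that $T=\sum_{k=1}^d M(\beta_k^{ij})\otimes u_ku_k^{\dagger}$. Then: (1) $T$ is separable if and only if $T$ is positive semidefinite; (2) $T$ is positive semidefinite if and only if all $d$ matrices $M(\beta_k^{ij})$, $k=1,\ldots,d$, are positive semidefinite; (3) if $T$ is separable, then $$T=\sum_{k=1}^d\sum_{j=0}^{n-1}\lambda_j^k\, v_j^k v_j^{k\dagger}\otimes u_ku_k^{\dagger},$$ where $\{\lambda_j^k\}_{j=0}^{n-1}$ and $\{v_j^k\}_{j=0}^{n-1}$ are the eigenvalues and a corresponding orthonormal basis of eigenvectors of the (positive semidefinite, hence Hermitian) matrix $M(\beta_k^{ij})$; this is a separable decomposition.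
   Context: The tensor product of matrices is the Kronecker product, so $A\otimes B$ for $A\in M(n,\mathbb{C})$, $B\in M(d,\mathbb{C})$ is the $nd\times nd$ block matrix whose $(i,j)$ block is $a_{ij}B$. A matrix $T\in M(nd,\mathbb{C})\cong M(n,\mathbb{C})\otimes M(d,\mathbb{C})$ is called separable if it is positive semidefinite and can be written as a finite sum $T=\sum_i \rho_i\otimes\sigma_i$ with $\rho_i\in M(n,\mathbb{C})$ and $\sigma_i\in M(d,\mathbb{C})$ positive semidefinite (states need not be normalized). *)

theory Defs
  imports "Jordan_Normal_Form.Matrix"
begin

definition kron :: "complex mat \<Rightarrow> complex mat \<Rightarrow> complex mat" where
  "kron A B = mat (dim_row A * dim_row B) (dim_col A * dim_col B)
     (\<lambda>(i,j). A $$ (i div dim_row B, j div dim_col B) * B $$ (i mod dim_row B, j mod dim_col B))"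

definition adj :: "complex mat \<Rightarrow> complex mat" where
  "adj A = mat (dim_col A) (dim_row A) (\<lambda>(i,j). cnj (A $$ (j,i)))"

definition cinner :: "complex vec \<Rightarrow> complex vec \<Rightarrow> complex" where
  "cinner v w = (\<Sum>i<dim_vec v. cnj (v $ i) * w $ i)"

definition outer :: "complex vec \<Rightarrow> complex mat" where
  "outer v = mat (dim_vec v) (dim_vec v) (\<lambda>(i,j). v $ i * cnj (v $ j))"

definition psd :: "complex mat \<Rightarrow> bool" where
  "psd A \<longleftrightarrow> dim_row A = dim_col A \<and>
     (\<forall>v \<in> carrier_vec (dim_row A). Im (cinner v (A *\<^sub>v v)) = 0 \<and> Re (cinner v (A *\<^sub>v v)) \<ge> 0)"

definition normal_mat :: "complex mat \<Rightarrow> bool" where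
  "normal_mat A \<longleftrightarrow> dim_row A = dim_col A \<and> A * adj A = adj A * A"

definition msum :: "nat \<Rightarrow> nat \<Rightarrow> ('i \<Rightarrow> complex mat) \<Rightarrow> 'i set \<Rightarrow> complex mat" where
  "msum r c f I = mat r c (\<lambda>(a,b). \<Sum>i\<in>I. f i $$ (a,b))"

definition separable :: "nat \<Rightarrow> nat \<Rightarrow> complex mat \<Rightarrow> bool" where
  "separable n d T \<longleftrightarrow> psd T \<and>
     (\<exists>m::nat. \<exists>\<rho> \<sigma>. (\<forall>i<m. \<rho> i \<in> carrier_mat n n \<and> psd (\<rho> i) \<and> \<sigma> i \<in> carrier_mat d d \<and> psd (\<sigma> i))
        \<and> T = msum (n*d) (n*d) (\<lambda>i. kron (\<rho> i) (\<sigma> i)) {..<m})"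

(* the (i,j) d x d block of T, i.e. B_ij with T = \<Sum> E_ij \<otimes> B_ij *)
definition blk :: "nat \<Rightarrow> complex mat \<Rightarrow> nat \<Rightarrow> nat \<Rightarrow> complex mat" where
  "blk d T i j = mat d d (\<lambda>(a,b). T $$ (i*d + a, j*d + b))"

definition orthonormal_basis :: "nat \<Rightarrow> (nat \<Rightarrow> complex vec) \<Rightarrow> bool" where
  "orthonormal_basis m u \<longleftrightarrow> (\<forall>k<m. u k \<in> carrier_vec m) \<and>
     (\<forall>k<m. \<forall>l<m. cinner (u k) (u l) = (if k = l then 1 else 0))"

end

theory Submission
  imports Defs "Jordan_Normal_Form.Determinant"
begin

lemma sum_split_nd: "(\<Sum>p<(n::nat)*d. f p) = (\<Sum>i<n. \<Sum>a<d. f (i*d+a)::'a::comm_monoid_add)"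
proof (induction n)
  case 0 then show ?case by simp
next
  case (Suc n)
  have "{..<Suc n * d} = {..<n*d} \<union> {n*d..<n*d+d}" by auto
  then have "(\<Sum>p<Suc n*d. f p) = (\<Sum>p<n*d. f p) + (\<Sum>p\<in>{n*d..<n*d+d}. f p)"
    by (simp add: sum.union_disjoint ivl_disj_int)
  also have "(\<Sum>p\<in>{n*d..<n*d+d}. f p) = (\<Sum>a\<in>{0..<d}. f (a+n*d))"
    using sum.shift_bounds_nat_ivl[of f 0 "n*d" d] by (simp add: add.commute)
  also have "\<dots> = (\<Sum>a<d. f (n*d+a))" by (simp add: lessThan_atLeast0 add.commute)
  finally show ?case using Suc by simp
qed

lemma mvidx: "A \<in> carrier_mat m k \<Longrightarrow> w \<in> carrier_vec k \<Longrightarrow> i < m \<Longrightarrow>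
  (A *\<^sub>v w) $ i = (\<Sum>j<k. A $$ (i,j) * w $ j)"
  by (simp add: scalar_prod_def row_def lessThan_atLeast0)

lemma complete:
  assumes u: "orthonormal_basis m u" and ab: "a<m" "b<m"
  shows "(\<Sum>k<m. u k $ a * cnj (u k $ b)) = (if a = b then 1 else 0)"
proof -
  define U where "U = mat m m (\<lambda>(a,k). u k $ a)"
  have U: "U \<in> carrier_mat m m" "adj U \<in> carrier_mat m m" by (auto simp: U_def adj_def)
  have "adj U * U = 1\<^sub>m m"
  proof (rule eq_matI)
    fix i j assume ij: "i < dim_row (1\<^sub>m m)" "j < dim_col (1\<^sub>m m)"
    have "(adj U * U) $$ (i,j) = (\<Sum>a<m. cnj (u i $ a) * u j $ a)"
      using ij by (simp add: U_def adj_def scalar_prod_def row_def col_def lessThan_atLeast0)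
    also have "\<dots> = cinner (u i) (u j)"
    proof -
      have "dim_vec (u i) = m" using u ij unfolding orthonormal_basis_def by auto
      then show ?thesis by (simp add: cinner_def)
    qed
    also have "\<dots> = 1\<^sub>m m $$ (i,j)" using u ij unfolding orthonormal_basis_def by auto
    finally show "(adj U * U) $$ (i,j) = 1\<^sub>m m $$ (i,j)" .
  qed (auto simp: U_def adj_def)
  then have "U * adj U = 1\<^sub>m m" using mat_mult_left_right_inverse U by blast
  then have "(U * adj U) $$ (a,b) = (if a = b then 1 else 0)" using ab by simp
  moreover have "(U * adj U) $$ (a,b) = (\<Sum>k<m. u k $ a * cnj (u k $ b))"
    using ab by (simp add: U_def adj_def scalar_prod_def row_def col_def lessThan_atLeast0)
  ultimately show ?thesis by simp
qed

lemma spectral_sum: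
  assumes A: "A \<in> carrier_mat m m" and u: "orthonormal_basis m u"
    and e: "\<forall>k<m. A *\<^sub>v u k = c k \<cdot>\<^sub>v u k" and ab: "a<m" "b<m"
  shows "A $$ (a,b) = (\<Sum>k<m. c k * (u k $ a * cnj (u k $ b)))"
proof -
  have uc: "\<And>k. k<m \<Longrightarrow> u k \<in> carrier_vec m" using u unfolding orthonormal_basis_def by auto
  have "A $$ (a,b) = (\<Sum>l<m. A $$ (a,l) * (if l = b then 1 else 0))"
    using ab by (simp add: if_distrib cong: if_cong)
  also have "\<dots> = (\<Sum>l<m. A $$ (a,l) * (\<Sum>k<m. u k $ l * cnj (u k $ b)))"
    using complete[OF u _ ab(2)] by simp
  also have "\<dots> = (\<Sum>k<m. (\<Sum>l<m. A $$ (a,l) * u k $ l) * cnj (u k $ b))"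
    by (simp add: sum_distrib_left sum_distrib_right mult.assoc) (rule sum.swap)
  also have "\<dots> = (\<Sum>k<m. (A *\<^sub>v u k) $ a * cnj (u k $ b))"
    using mvidx[OF A uc ab(1)] by simp
  also have "\<dots> = (\<Sum>k<m. c k * (u k $ a * cnj (u k $ b)))"
  proof (rule sum.cong)
    fix k assume "k \<in> {..<m}"
    then have "A *\<^sub>v u k = c k \<cdot>\<^sub>v u k" "dim_vec (u k) = m" using e uc by auto
    then show "(A *\<^sub>v u k) $ a * cnj (u k $ b) = c k * (u k $ a * cnj (u k $ b))" using ab by simp
  qed simp
  finally show ?thesis .
qed


lemma idx_lt: "i < n \<Longrightarrow> a < (d::nat) \<Longrightarrow> i*d+a < n*d"
proof -
  assume "i<n" "a<d"
  then have "i*d + a < i*d + d" by simp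
  also have "\<dots> = Suc i * d" by simp
  also have "\<dots> \<le> n*d" using \<open>i<n\<close> by (intro mult_right_mono) auto
  finally show ?thesis .
qed

lemma idx_divmod: "a < (d::nat) \<Longrightarrow> (i*d+a) div d = i \<and> (i*d+a) mod d = a"
  by auto

lemma kron_idx:
  assumes "M \<in> carrier_mat n n" "u \<in> carrier_vec d" "i<n" "j<n" "a<d" "b<d"
  shows "kron M (outer u) $$ (i*d+a, j*d+b) = M $$ (i,j) * (u $ a * cnj (u $ b))"
  using assms idx_lt[of i n a d] idx_lt[of j n b d] idx_divmod[of a d i] idx_divmod[of b d j]
  by (simp add: kron_def outer_def)

lemma kron_carrier: "M \<in> carrier_mat n n \<Longrightarrow> u \<in> carrier_vec d \<Longrightarrow> kron M (outer u) \<in> carrier_mat (n*d) (n*d)"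
  by (simp add: kron_def outer_def)

lemma swap3: "(\<Sum>a\<in>A. \<Sum>j\<in>B. \<Sum>b\<in>C. f a j b) = (\<Sum>j\<in>B. \<Sum>b\<in>C. \<Sum>a\<in>A. f a j b)"
proof -
  have "(\<Sum>a\<in>A. \<Sum>j\<in>B. \<Sum>b\<in>C. f a j b) = (\<Sum>j\<in>B. \<Sum>a\<in>A. \<Sum>b\<in>C. f a j b)" by (rule sum.swap)
  also have "\<dots> = (\<Sum>j\<in>B. \<Sum>b\<in>C. \<Sum>a\<in>A. f a j b)" by (rule sum.cong[OF refl], rule sum.swap)
  finally show ?thesis .
qed

lemma quad_one:
  assumes M: "M \<in> carrier_mat n n" and u: "u \<in> carrier_vec d" and w: "w \<in> carrier_vec (n*d)"
  defines "x \<equiv> vec n (\<lambda>j. \<Sum>b<d. cnj (u $ b) * w $ (j*d+b))"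
  shows "cinner w (kron M (outer u) *\<^sub>v w) = cinner x (M *\<^sub>v x)"
proof -
  have K: "kron M (outer u) \<in> carrier_mat (n*d) (n*d)" using kron_carrier[OF M u] .
  have x: "x \<in> carrier_vec n" by (simp add: x_def)
  have "cinner w (kron M (outer u) *\<^sub>v w) = (\<Sum>p<n*d. cnj (w $ p) * (\<Sum>q<n*d. kron M (outer u) $$ (p,q) * w $ q))"
    unfolding cinner_def using w mvidx[OF K w] by (intro sum.cong) auto
  also have "\<dots> = (\<Sum>i<n. \<Sum>a<d. cnj (w $ (i*d+a)) * (\<Sum>j<n. \<Sum>b<d. kron M (outer u) $$ (i*d+a,j*d+b) * w $ (j*d+b)))"
    by (simp add: sum_split_nd)
  also have "\<dots> = (\<Sum>i<n. \<Sum>a<d. cnj (w $ (i*d+a)) * (\<Sum>j<n. \<Sum>b<d. M $$ (i,j) * (u $ a * cnj (u $ b)) * w $ (j*d+b)))"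
    using kron_idx[OF M u] by (intro sum.cong refl) simp
  also have "\<dots> = (\<Sum>i<n. \<Sum>a<d. \<Sum>j<n. \<Sum>b<d. cnj (w $ (i*d+a)) * M $$ (i,j) * u $ a * cnj (u $ b) * w $ (j*d+b))"
    by (simp add: sum_distrib_left mult_ac)
  also have "\<dots> = (\<Sum>i<n. \<Sum>j<n. \<Sum>b<d. \<Sum>a<d. cnj (w $ (i*d+a)) * M $$ (i,j) * u $ a * cnj (u $ b) * w $ (j*d+b))"
    by (rule sum.cong[OF refl], rule swap3)
  also have "\<dots> = (\<Sum>i<n. cnj (x $ i) * (\<Sum>j<n. M $$ (i,j) * x $ j))"
    by (simp add: x_def sum_distrib_left sum_distrib_right mult_ac)
  also have "\<dots> = cinner x (M *\<^sub>v x)"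
    unfolding cinner_def using x mvidx[OF M x] by (intro sum.cong) auto
  finally show ?thesis .
qed

lemma psd_outer:
  assumes "Im r = 0" "Re r \<ge> 0"
  shows "psd (r \<cdot>\<^sub>m outer v)"
  unfolding psd_def
proof (intro conjI ballI)
  show "dim_row (r \<cdot>\<^sub>m outer v) = dim_col (r \<cdot>\<^sub>m outer v)" by (simp add: outer_def)
  fix w :: "complex vec" assume "w \<in> carrier_vec (dim_row (r \<cdot>\<^sub>m outer v))"
  then have w: "w \<in> carrier_vec (dim_vec v)" by (simp add: outer_def)
  define c where "c = cinner v w"
  have Mv: "(r \<cdot>\<^sub>m outer v) *\<^sub>v w = vec (dim_vec v) (\<lambda>a. r * v $ a * c)"
  proof
    show "dim_vec ((r \<cdot>\<^sub>m outer v) *\<^sub>v w) = dim_vec (vec (dim_vec v) (\<lambda>a. r * v $ a * c))"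
      by (simp add: outer_def)
    fix a assume "a < dim_vec (vec (dim_vec v) (\<lambda>a. r * v $ a * c))"
    then have a: "a < dim_vec v" by simp
    have C: "r \<cdot>\<^sub>m outer v \<in> carrier_mat (dim_vec v) (dim_vec v)" by (simp add: outer_def)
    have "((r \<cdot>\<^sub>m outer v) *\<^sub>v w) $ a = (\<Sum>b<dim_vec v. (r \<cdot>\<^sub>m outer v) $$ (a,b) * w $ b)"
      using mvidx[OF C w a] .
    also have "\<dots> = (\<Sum>b<dim_vec v. r * v $ a * (cnj (v $ b) * w $ b))"
      using a by (intro sum.cong) (auto simp: outer_def)
    also have "\<dots> = r * v $ a * c" by (simp add: c_def cinner_def sum_distrib_left)
    finally show "((r \<cdot>\<^sub>m outer v) *\<^sub>v w) $ a = vec (dim_vec v) (\<lambda>a. r * v $ a * c) $ a" using a by simp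
  qed
  have "cinner w ((r \<cdot>\<^sub>m outer v) *\<^sub>v w) = (\<Sum>a<dim_vec v. cnj (w $ a) * (r * v $ a * c))"
    unfolding cinner_def Mv using w by (intro sum.cong) auto
  also have "\<dots> = r * c * cnj (\<Sum>a<dim_vec v. cnj (v $ a) * w $ a)"
    by (simp add: sum_distrib_left mult_ac)
  also have "\<dots> = r * (c * cnj c)" by (simp add: c_def cinner_def)
  also have "\<dots> = r * of_real ((cmod c)^2)" by (metis complex_norm_square)
  finally have E: "cinner w ((r \<cdot>\<^sub>m outer v) *\<^sub>v w) = r * of_real ((cmod c)^2)" .
  show "Im (cinner w ((r \<cdot>\<^sub>m outer v) *\<^sub>v w)) = 0" unfolding E using assms by simp
  show "Re (cinner w ((r \<cdot>\<^sub>m outer v) *\<^sub>v w)) \<ge> 0" unfolding E using assms by simp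
qed


lemma smult_one_mat: "(1::complex) \<cdot>\<^sub>m A = A" by (rule eq_matI) auto

lemma msum_carrier: "msum r c f I \<in> carrier_mat r c" by (simp add: msum_def)

lemma msum_mv:
  assumes I: "finite I" and f: "\<forall>k\<in>I. f k \<in> carrier_mat r r" and w: "w \<in> carrier_vec r"
  shows "cinner w (msum r r f I *\<^sub>v w) = (\<Sum>k\<in>I. cinner w (f k *\<^sub>v w))"
proof -
  have "cinner w (msum r r f I *\<^sub>v w) = (\<Sum>p<r. cnj (w $ p) * (\<Sum>q<r. (\<Sum>k\<in>I. f k $$ (p,q)) * w $ q))"
    unfolding cinner_def using w mvidx[OF msum_carrier w] by (intro sum.cong) (auto simp: msum_def)
  also have "\<dots> = (\<Sum>p<r. \<Sum>q<r. \<Sum>k\<in>I. cnj (w $ p) * f k $$ (p,q) * w $ q)"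
    by (simp add: sum_distrib_left sum_distrib_right mult_ac)
  also have "\<dots> = (\<Sum>k\<in>I. \<Sum>p<r. \<Sum>q<r. cnj (w $ p) * f k $$ (p,q) * w $ q)"
    by (rule swap3[symmetric])
  also have "\<dots> = (\<Sum>k\<in>I. cinner w (f k *\<^sub>v w))"
  proof (rule sum.cong[OF refl])
    fix k assume "k \<in> I"
    then have fk: "f k \<in> carrier_mat r r" using f by auto
    have "cinner w (f k *\<^sub>v w) = (\<Sum>p<r. cnj (w $ p) * (\<Sum>q<r. f k $$ (p,q) * w $ q))"
      unfolding cinner_def using w mvidx[OF fk w] by (intro sum.cong) auto
    then show "(\<Sum>p<r. \<Sum>q<r. cnj (w $ p) * f k $$ (p,q) * w $ q) = cinner w (f k *\<^sub>v w)"
      by (simp add: sum_distrib_left mult_ac)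
  qed
  finally show ?thesis .
qed

theorem theorem1:
  fixes n d :: nat and T :: "complex mat"
    and u :: "nat \<Rightarrow> complex vec" and \<beta> :: "nat \<Rightarrow> nat \<Rightarrow> nat \<Rightarrow> complex"
  assumes "n \<ge> 1" and "d \<ge> 1"
    and T: "T \<in> carrier_mat (n*d) (n*d)"
    and normal: "\<forall>i<n. \<forall>j<n. normal_mat (blk d T i j)"
    and commute: "\<forall>i<n. \<forall>j<n. \<forall>i'<n. \<forall>j'<n. blk d T i j * blk d T i' j' = blk d T i' j' * blk d T i j"
    and u: "orthonormal_basis d u"
    and eig: "\<forall>i<n. \<forall>j<n. \<forall>k<d. blk d T i j *\<^sub>v u k = \<beta> i j k \<cdot>\<^sub>v u k"
  defines "M \<equiv> \<lambda>k. mat n n (\<lambda>(i,j). \<beta> i j k)"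
  shows "T = msum (n*d) (n*d) (\<lambda>k. kron (M k) (outer (u k))) {..<d}
    \<and> (separable n d T \<longleftrightarrow> psd T)
    \<and> (psd T \<longleftrightarrow> (\<forall>k<d. psd (M k)))
    \<and> (separable n d T \<longrightarrow>
           (\<forall>lam v. (\<forall>k<d. orthonormal_basis n (v k) \<and>
                        (\<forall>j<n. M k *\<^sub>v v k j = lam k j \<cdot>\<^sub>v v k j))
             \<longrightarrow> T = msum (n*d) (n*d) (\<lambda>(k,j). kron (lam k j \<cdot>\<^sub>m outer (v k j)) (outer (u k)))
                        ({..<d} \<times> {..<n})
               \<and> (\<forall>k<d. \<forall>j<n. psd (lam k j \<cdot>\<^sub>m outer (v k j)) \<and> psd (outer (u k)))))"
proof -
  have uc: "\<And>k. k<d \<Longrightarrow> u k \<in> carrier_vec d" using u unfolding orthonormal_basis_def by auto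
  have Mc: "\<And>k. M k \<in> carrier_mat n n" by (simp add: M_def)
  have Mij: "\<And>k i j. i<n \<Longrightarrow> j<n \<Longrightarrow> M k $$ (i,j) = \<beta> i j k" by (simp add: M_def)
  define S where "S = msum (n*d) (n*d) (\<lambda>k. kron (M k) (outer (u k))) {..<d}"
  have dpos: "d > 0" using assms(2) by simp
  have split: "\<And>p. p < n*d \<Longrightarrow> p = (p div d)*d + p mod d \<and> p div d < n \<and> p mod d < d"
    using dpos by (auto simp: less_mult_imp_div_less)
  have Tent: "\<And>p q. p < n*d \<Longrightarrow> q < n*d \<Longrightarrow>
      T $$ (p,q) = (\<Sum>k<d. M k $$ (p div d, q div d) * (u k $ (p mod d) * cnj (u k $ (q mod d))))"
  proof -
    fix p q assume p: "p < n*d" and q: "q < n*d"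
    define i a j b where "i = p div d" "a = p mod d" "j = q div d" "b = q mod d"
    have ii: "p = i*d+a" "i<n" "a<d" "q = j*d+b" "j<n" "b<d"
      using split[OF p] split[OF q] unfolding i_a_j_b_def by auto
    have B: "blk d T i j \<in> carrier_mat d d" by (simp add: blk_def)
    have "T $$ (p,q) = blk d T i j $$ (a,b)" using ii by (simp add: blk_def)
    also have "\<dots> = (\<Sum>k<d. \<beta> i j k * (u k $ a * cnj (u k $ b)))"
      using spectral_sum[OF B u _ ii(3) ii(6), of "\<beta> i j"] eig ii by auto
    also have "\<dots> = (\<Sum>k<d. M k $$ (i, j) * (u k $ a * cnj (u k $ b)))"
      using Mij ii by simp
    finally show "T $$ (p,q) = (\<Sum>k<d. M k $$ (p div d, q div d) * (u k $ (p mod d) * cnj (u k $ (q mod d))))"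
      unfolding i_a_j_b_def .
  qed
  have Sent: "\<And>p q. p < n*d \<Longrightarrow> q < n*d \<Longrightarrow>
      S $$ (p,q) = (\<Sum>k<d. M k $$ (p div d, q div d) * (u k $ (p mod d) * cnj (u k $ (q mod d))))"
  proof -
    fix p q assume p: "p < n*d" and q: "q < n*d"
    show "S $$ (p,q) = (\<Sum>k<d. M k $$ (p div d, q div d) * (u k $ (p mod d) * cnj (u k $ (q mod d))))"
      unfolding S_def msum_def using p q
    proof (simp, intro sum.cong refl)
      fix k assume "k \<in> {..<d}"
      then have "u k \<in> carrier_vec d" using uc by auto
      then show "kron (M k) (outer (u k)) $$ (p, q) =
         M k $$ (p div d, q div d) * (u k $ (p mod d) * cnj (u k $ (q mod d)))"
        using kron_idx[OF Mc _ _ _ _ _, of "u k" d "p div d" "q div d" "p mod d" "q mod d"] split[OF p] split[OF q]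
        by auto
    qed
  qed
  have P0: "T = S"
    by (rule eq_matI) (use T Tent Sent in \<open>auto simp: S_def msum_def\<close>)
  define x where "x = (\<lambda>k w. vec n (\<lambda>j. \<Sum>b<d. cnj (u k $ b) * w $ (j*d+b)))"
  have xc: "\<And>k w. x k w \<in> carrier_vec n" by (simp add: x_def)
  have quad: "\<And>w. w \<in> carrier_vec (n*d) \<Longrightarrow> cinner w (T *\<^sub>v w) = (\<Sum>k<d. cinner (x k w) (M k *\<^sub>v x k w))"
  proof -
    fix w :: "complex vec" assume w: "w \<in> carrier_vec (n*d)"
    have "cinner w (T *\<^sub>v w) = (\<Sum>k<d. cinner w (kron (M k) (outer (u k)) *\<^sub>v w))"
      unfolding P0 S_def using w uc Mc kron_carrier by (intro msum_mv) auto
    also have "\<dots> = (\<Sum>k<d. cinner (x k w) (M k *\<^sub>v x k w))"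
      unfolding x_def using quad_one[OF Mc uc w] by simp
    finally show "cinner w (T *\<^sub>v w) = (\<Sum>k<d. cinner (x k w) (M k *\<^sub>v x k w))" .
  qed
  have P2: "psd T \<longleftrightarrow> (\<forall>k<d. psd (M k))"
  proof
    assume pT: "psd T"
    show "\<forall>k<d. psd (M k)"
    proof (intro allI impI)
      fix k assume k: "k<d"
      show "psd (M k)" unfolding psd_def
      proof (intro conjI ballI)
        show "dim_row (M k) = dim_col (M k)" using Mc[of k] by simp
        fix y :: "complex vec" assume "y \<in> carrier_vec (dim_row (M k))"
        then have y: "y \<in> carrier_vec n" using Mc[of k] by simp
        define w where "w = vec (n*d) (\<lambda>p. y $ (p div d) * u k $ (p mod d))"
        have w: "w \<in> carrier_vec (n*d)" by (simp add: w_def)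
        have xw: "\<And>l. l < d \<Longrightarrow> x l w = (if l = k then y else 0\<^sub>v n)"
        proof -
          fix l assume l: "l<d"
          show "x l w = (if l = k then y else 0\<^sub>v n)"
          proof (rule eq_vecI)
            fix j assume "j < dim_vec (if l = k then y else 0\<^sub>v n)"
            then have j: "j < n" using y by (auto split: if_splits)
            have "x l w $ j = (\<Sum>b<d. cnj (u l $ b) * (y $ j * u k $ b))"
              unfolding x_def w_def using j idx_lt[OF j] idx_divmod by (simp add: idx_lt)
            also have "\<dots> = y $ j * cinner (u l) (u k)"
              using uc[OF l] by (simp add: cinner_def sum_distrib_left mult_ac)
            also have "\<dots> = (if l = k then y else 0\<^sub>v n) $ j"
              using u l k j unfolding orthonormal_basis_def by auto
            finally show "x l w $ j = (if l = k then y else 0\<^sub>v n) $ j" .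
          qed (use y in \<open>simp add: x_def\<close>)
        qed
        have "cinner w (T *\<^sub>v w) = (\<Sum>l<d. if l = k then cinner y (M k *\<^sub>v y) else 0)"
          unfolding quad[OF w] by (intro sum.cong refl) (auto simp: xw cinner_def)
        also have "\<dots> = cinner y (M k *\<^sub>v y)" using k by simp
        finally have E: "cinner w (T *\<^sub>v w) = cinner y (M k *\<^sub>v y)" .
        have "w \<in> carrier_vec (dim_row T)" using w T by simp
        then have "Im (cinner w (T *\<^sub>v w)) = 0 \<and> 0 \<le> Re (cinner w (T *\<^sub>v w))"
          using pT unfolding psd_def by blast
        then show "Im (cinner y (M k *\<^sub>v y)) = 0" "0 \<le> Re (cinner y (M k *\<^sub>v y))"
          using E by auto
      qed
    qed
  next
    assume pM: "\<forall>k<d. psd (M k)"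
    show "psd T" unfolding psd_def
    proof (intro conjI ballI)
      show "dim_row T = dim_col T" using T by simp
      fix w :: "complex vec" assume "w \<in> carrier_vec (dim_row T)"
      then have w: "w \<in> carrier_vec (n*d)" using T by simp
      have each: "\<And>k. k<d \<Longrightarrow> Im (cinner (x k w) (M k *\<^sub>v x k w)) = 0 \<and> Re (cinner (x k w) (M k *\<^sub>v x k w)) \<ge> 0"
        using pM xc Mc unfolding psd_def by (metis carrier_matD(1))
      show "Im (cinner w (T *\<^sub>v w)) = 0" unfolding quad[OF w] using each by (simp add: Im_sum)
      show "Re (cinner w (T *\<^sub>v w)) \<ge> 0" unfolding quad[OF w] using each by (simp add: Re_sum) (rule sum_nonneg, auto)
    qed
  qed
  have psdu: "\<And>k. psd (outer (u k))" using psd_outer[of 1 "u _"] by (simp add: smult_one_mat)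
  have P1: "separable n d T \<longleftrightarrow> psd T"
  proof
    assume "separable n d T" then show "psd T" unfolding separable_def by simp
  next
    assume pT: "psd T"
    then have pM: "\<forall>k<d. psd (M k)" using P2 by simp
    show "separable n d T" unfolding separable_def
      using pT pM Mc uc psdu P0 unfolding S_def
      by (intro conjI exI[of _ d] exI[of _ M] exI[of _ "\<lambda>k. outer (u k)"]) (auto simp: outer_def)
  qed
  have P3: "separable n d T \<longrightarrow>
           (\<forall>lam v. (\<forall>k<d. orthonormal_basis n (v k) \<and>
                        (\<forall>j<n. M k *\<^sub>v v k j = lam k j \<cdot>\<^sub>v v k j))
             \<longrightarrow> T = msum (n*d) (n*d) (\<lambda>(k,j). kron (lam k j \<cdot>\<^sub>m outer (v k j)) (outer (u k)))
                        ({..<d} \<times> {..<n})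
               \<and> (\<forall>k<d. \<forall>j<n. psd (lam k j \<cdot>\<^sub>m outer (v k j)) \<and> psd (outer (u k))))"
  proof (intro impI allI)
    fix lam v
    assume sep: "separable n d T"
      and H: "\<forall>k<d. orthonormal_basis n (v k) \<and> (\<forall>j<n. M k *\<^sub>v v k j = lam k j \<cdot>\<^sub>v v k j)"
    have pM: "\<forall>k<d. psd (M k)" using sep P1 P2 by simp
    have vc: "\<And>k j. k<d \<Longrightarrow> j<n \<Longrightarrow> v k j \<in> carrier_vec n" using H unfolding orthonormal_basis_def by auto
    have lam: "\<And>k j. k<d \<Longrightarrow> j<n \<Longrightarrow> lam k j = cinner (v k j) (M k *\<^sub>v v k j)"
    proof -
      fix k j assume k: "k<d" and j: "j<n"
      have "cinner (v k j) (M k *\<^sub>v v k j) = cinner (v k j) (lam k j \<cdot>\<^sub>v v k j)" using H k j by simp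
      also have "\<dots> = lam k j * cinner (v k j) (v k j)"
        unfolding cinner_def by (simp add: sum_distrib_left mult_ac)
      also have "\<dots> = lam k j" using H k j unfolding orthonormal_basis_def by simp
      finally show "lam k j = cinner (v k j) (M k *\<^sub>v v k j)" by simp
    qed
    have lampos: "\<And>k j. k<d \<Longrightarrow> j<n \<Longrightarrow> Im (lam k j) = 0 \<and> Re (lam k j) \<ge> 0"
      using pM vc Mc lam unfolding psd_def by (metis carrier_matD(1))
    show "T = msum (n*d) (n*d) (\<lambda>(k,j). kron (lam k j \<cdot>\<^sub>m outer (v k j)) (outer (u k))) ({..<d} \<times> {..<n})
               \<and> (\<forall>k<d. \<forall>j<n. psd (lam k j \<cdot>\<^sub>m outer (v k j)) \<and> psd (outer (u k)))"
    proof (intro conjI allI impI)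
      show "psd (lam k j \<cdot>\<^sub>m outer (v k j))" if "k<d" "j<n" for k j
        using lampos[OF that] psd_outer by blast
      show "psd (outer (u k))" for k using psdu .
      show "T = msum (n*d) (n*d) (\<lambda>(k,j). kron (lam k j \<cdot>\<^sub>m outer (v k j)) (outer (u k))) ({..<d} \<times> {..<n})"
      proof (rule eq_matI)
        fix p q assume "p < dim_row (msum (n*d) (n*d) (\<lambda>(k,j). kron (lam k j \<cdot>\<^sub>m outer (v k j)) (outer (u k))) ({..<d} \<times> {..<n}))"
          "q < dim_col (msum (n*d) (n*d) (\<lambda>(k,j). kron (lam k j \<cdot>\<^sub>m outer (v k j)) (outer (u k))) ({..<d} \<times> {..<n}))"
        then have p: "p < n*d" and q: "q < n*d" by (auto simp: msum_def)
        define i a j b where "i = p div d" "a = p mod d" "j = q div d" "b = q mod d"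
        have ii: "p = i*d+a" "i<n" "a<d" "q = j*d+b" "j<n" "b<d"
          using split[OF p] split[OF q] unfolding i_a_j_b_def by auto
        have "msum (n*d) (n*d) (\<lambda>(k,j). kron (lam k j \<cdot>\<^sub>m outer (v k j)) (outer (u k))) ({..<d} \<times> {..<n}) $$ (p,q)
           = (\<Sum>(k,l)\<in>{..<d} \<times> {..<n}. kron (lam k l \<cdot>\<^sub>m outer (v k l)) (outer (u k)) $$ (p,q))"
          using p q by (simp add: msum_def case_prod_beta)
        also have "\<dots> = (\<Sum>k<d. \<Sum>l<n. kron (lam k l \<cdot>\<^sub>m outer (v k l)) (outer (u k)) $$ (p,q))"
          by (simp add: sum.cartesian_product)
        also have "\<dots> = (\<Sum>k<d. \<Sum>l<n. (lam k l * (v k l $ i * cnj (v k l $ j))) * (u k $ a * cnj (u k $ b)))"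
        proof (intro sum.cong refl)
          fix k l assume k: "k \<in> {..<d}" and l: "l \<in> {..<n}"
          have C: "lam k l \<cdot>\<^sub>m outer (v k l) \<in> carrier_mat n n" using vc[of k l] k l by (auto simp: outer_def)
          show "kron (lam k l \<cdot>\<^sub>m outer (v k l)) (outer (u k)) $$ (p,q) = (lam k l * (v k l $ i * cnj (v k l $ j))) * (u k $ a * cnj (u k $ b))"
            using uc[of k] k kron_idx[OF C _ ii(2) ii(5) ii(3) ii(6), of "u k"] ii k l vc[of k l] by (simp add: outer_def)
        qed
        also have "\<dots> = (\<Sum>k<d. M k $$ (i,j) * (u k $ a * cnj (u k $ b)))"
        proof (intro sum.cong refl)
          fix k assume k: "k \<in> {..<d}"
          have "M k $$ (i,j) = (\<Sum>l<n. lam k l * (v k l $ i * cnj (v k l $ j)))"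
            using spectral_sum[OF Mc[of k] _ _ ii(2) ii(5), where u="v k" and c="lam k"] H k by auto
          then show "(\<Sum>l<n. (lam k l * (v k l $ i * cnj (v k l $ j))) * (u k $ a * cnj (u k $ b))) = M k $$ (i,j) * (u k $ a * cnj (u k $ b))"
            by (simp add: sum_distrib_right)
        qed
        also have "\<dots> = T $$ (p,q)" using Tent[OF p q] unfolding i_a_j_b_def by simp
        finally show "T $$ (p,q) = msum (n*d) (n*d) (\<lambda>(k,j). kron (lam k j \<cdot>\<^sub>m outer (v k j)) (outer (u k))) ({..<d} \<times> {..<n}) $$ (p,q)" by simp
      qed (use T in \<open>auto simp: msum_def\<close>)
    qed
  qed
  show ?thesis using P0 P1 P2 P3 unfolding S_def by blast
qed

end
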